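(* Consider the two-agent zero-sum dynamic game described in the context (dynamics constraints only). Fix $t\in\{1,\dots,K-1\}$ and a state/control trajectory $(x_{1:K+1},u^1_{1:K},u^2_{1:K})$ generated by differentiable feedback policies $\pi^1_s,\pi^2_s$. Suppose that, for each agent $i\in\{1,2\}$, there are multipliers $\lambda^i_s$ ($s\in T_t$) and $\psi^i_s$ ($s\in T_{t+1}$) such that the time-$t$ feedback first-order conditions (FB1)–(FB6) hold for agent $i$ along this trajectory. Then necessarily $$\lambda^{-i}_s=-\lambda^i_s\quad\text{for all } s\in T_t,\qquad \psi^1_s=\psi^2_s=0\quad\text{for all } s\in T_{t+1}.$$ In particular, at any local FBNE the constraints forcing the other agent to follow its feedback policy have zero multipliers for both agents.
   Context: Two-agent zero-sum discrete-time dynamic game with horizon $K\in\mathbb N$. States $x_t\in\mathbb R^n$ ($t=1,\dots,K+1$), with known initial state $x_1$; controls $u^i_t\in\mathbb R^{m_i}$, $i\in\{1,2\}$, $t=1,\dots,K$. Dynamics $x_{t+1}=f_t(x_t,u^1_t,u^2_t)$ with $f_t$ smooth (possibly nonlinear). Agent 1 has stage costs $\ell_t(x_t,u^1_t,u^2_t)$ ($t\le K$) and terminal cost $\ell_{K+1}(x_{K+1})$; write $\ell^1_t=\ell_t$ and $\ell^2_t=-\ell_t$ (agent 2 minimizes the negative), costs sufficiently smooth (possibly nonconvex). For agent $i$, $-i$ denotes the other agent, and $\ell^i_t(x_t,u^i_t,u^{-i}_t)$, $f_t(x_t,u^i_t,u^{-i}_t)$ denote the same functions with arguments reordered. $T_t:=\{t,t+1,\dots,K\}$.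 Jacobians are denoted $\nabla$; all derivatives are evaluated along the trajectory. Feedback first-order conditions for agent $i$ at time $t$ (the KKT conditions of agent $i$'s problem of minimizing $\sum_{s=t}^K\ell^i_s+\ell^i_{K+1}$ over $u^i_{t:K}$, $u^{-i}_{t+1:K}$, $x_{t+1:K+1}$ subject to the dynamics for $s\in T_t$ and $u^{-i}_s=\pi^{-i}_s(x_s)$ for $s\in T_{t+1}$, with multipliers $\lambda^i_s$ for dynamics and $\psi^i_s$ for policy constraints): (FB1) $\nabla_{u^{-i}_s}\ell^i_s+(\nabla_{u^{-i}_s}f_s)^\top\lambda^i_s-\psi^i_s=0$, $s\in T_{t+1}$; (FB2) $\nabla_{u^i_s}\ell^i_s+(\nabla_{u^i_s}f_s)^\top\lambda^i_s=0$, $s\in T_t$; (FB3) $\nabla_{x_{K+1}}\ell^i_{K+1}-\lambda^i_K=0$; (FB4) $x_{s+1}=f_s(x_s,u^i_s,u^{-i}_s)$, $s\in T_t$; (FB5) $u^{-i}_s=\pi^{-i}_s(x_s)$, $s\in T_{t+1}$; (FB6) $\nabla_{x_s}\ell^i_s-\lambda^i_{s-1}+(\nabla_{x_s}f_s)^\top\lambda^i_s+(\nabla_{x_s}\pi^{-i}_s)^\top\psi^i_s=0$, $s\in T_{t+1}$. *)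

theory Defs
  imports "HOL-Analysis.Analysis"
begin

definition jacobian :: "(real^'a \<Rightarrow> real^'b) \<Rightarrow> real^'a \<Rightarrow> real^'a^'b" where
  "jacobian F z = matrix (frechet_derivative F (at z))"

definition gradient :: "(real^'a \<Rightarrow> real) \<Rightarrow> real^'a \<Rightarrow> real^'a" where
  "gradient g z = (\<chi> j. frechet_derivative g (at z) (axis j 1))"

text \<open>Arguments: horizon K, time t, the agent's stage costs l s x ui uo and terminal
  cost lT, the dynamics f s x ui uo (arguments ordered as (x, own control,
  other's control)), the other agent's policies piO, the trajectory x, own
  controls ui, other's controls uo, multipliers lam (dynamics) and psi
  (policy constraints).\<close>

definition FB_conditions ::
  "nat \<Rightarrow> nat \<Rightarrow> (nat \<Rightarrow> real^'n \<Rightarrow> real^'a \<Rightarrow> real^'b \<Rightarrow> real) \<Rightarrow> (real^'n \<Rightarrow> real)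
   \<Rightarrow> (nat \<Rightarrow> real^'n \<Rightarrow> real^'a \<Rightarrow> real^'b \<Rightarrow> real^'n) \<Rightarrow> (nat \<Rightarrow> real^'n \<Rightarrow> real^'b)
   \<Rightarrow> (nat \<Rightarrow> real^'n) \<Rightarrow> (nat \<Rightarrow> real^'a) \<Rightarrow> (nat \<Rightarrow> real^'b)
   \<Rightarrow> (nat \<Rightarrow> real^'n) \<Rightarrow> (nat \<Rightarrow> real^'b) \<Rightarrow> bool" where
  "FB_conditions K t l lT f piO x ui uo lam psi \<longleftrightarrow>
     \<comment> \<open>(FB1)\<close>
     (\<forall>s\<in>{t+1..K}.
        gradient (\<lambda>v. l s (x s) (ui s) v) (uo s)
        + transpose (jacobian (\<lambda>v. f s (x s) (ui s) v) (uo s)) *v lam s - psi s = 0) \<and>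
     \<comment> \<open>(FB2)\<close>
     (\<forall>s\<in>{t..K}.
        gradient (\<lambda>v. l s (x s) v (uo s)) (ui s)
        + transpose (jacobian (\<lambda>v. f s (x s) v (uo s)) (ui s)) *v lam s = 0) \<and>
     \<comment> \<open>(FB3)\<close>
     (gradient lT (x (K+1)) - lam K = 0) \<and>
     \<comment> \<open>(FB4)\<close>
     (\<forall>s\<in>{t..K}. x (s+1) = f s (x s) (ui s) (uo s)) \<and>
     \<comment> \<open>(FB5)\<close>
     (\<forall>s\<in>{t+1..K}. uo s = piO s (x s)) \<and>
     \<comment> \<open>(FB6)\<close>
     (\<forall>s\<in>{t+1..K}.
        gradient (\<lambda>y. l s y (ui s) (uo s)) (x s) - lam (s - 1)
        + transpose (jacobian (\<lambda>y. f s y (ui s) (uo s)) (x s)) *v lam s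
        + transpose (jacobian (piO s) (x s)) *v psi s = 0)"

end

theory Submission
  imports Defs
begin

lemma grad_neg:
  assumes "g differentiable (at z)"
  shows "gradient (\<lambda>v. - g v) z = - gradient g z"
proof -
  have "(g has_derivative frechet_derivative g (at z)) (at z)"
    using assms frechet_derivative_works by blast
  hence "((\<lambda>v. - g v) has_derivative (\<lambda>h. - frechet_derivative g (at z) h)) (at z)"
    by (rule has_derivative_minus)
  hence "frechet_derivative (\<lambda>v. - g v) (at z) = (\<lambda>h. - frechet_derivative g (at z) h)"
    by (metis frechet_derivative_at)
  thus ?thesis unfolding gradient_def by (simp add: vec_eq_iff)
qed

lemma part_diff:
  fixes L :: "'x::real_normed_vector \<Rightarrow> 'y::real_normed_vector \<Rightarrow> 'z::real_normed_vector \<Rightarrow> real"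
  assumes "\<And>w. (\<lambda>(y, a, b). L y a b) differentiable (at w)"
  shows "(\<lambda>v. L y a v) differentiable (at b)"
    "(\<lambda>v. L y v b) differentiable (at a)"
    "(\<lambda>v. L v a b) differentiable (at y)"
proof -
  have d1: "(\<lambda>v. (y, a, v)) differentiable (at b)"
    using has_derivative_Pair[OF has_derivative_const has_derivative_Pair[OF has_derivative_const has_derivative_ident]]
    unfolding differentiable_def by blast
  have "((\<lambda>(y, a, b). L y a b) \<circ> (\<lambda>v. (y, a, v))) differentiable (at b)"
    by (rule differentiable_chain_at[OF d1 assms])
  thus "(\<lambda>v. L y a v) differentiable (at b)" by (simp add: o_def)
  have d2: "(\<lambda>v. (y, v, b)) differentiable (at a)"
    using has_derivative_Pair[OF has_derivative_const has_derivative_Pair[OF has_derivative_ident has_derivative_const]]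
    unfolding differentiable_def by blast
  have "((\<lambda>(y, a, b). L y a b) \<circ> (\<lambda>v. (y, v, b))) differentiable (at a)"
    by (rule differentiable_chain_at[OF d2 assms])
  thus "(\<lambda>v. L y v b) differentiable (at a)" by (simp add: o_def)
  have d3: "(\<lambda>v. (v, a, b)) differentiable (at y)"
    using has_derivative_Pair[OF has_derivative_ident has_derivative_const]
    unfolding differentiable_def by blast
  have "((\<lambda>(y, a, b). L y a b) \<circ> (\<lambda>v. (v, a, b))) differentiable (at y)"
    by (rule differentiable_chain_at[OF d3 assms])
  thus "(\<lambda>v. L v a b) differentiable (at y)" by (simp add: o_def)
qed

lemma mvneg: "(A::real^'a^'b) *v (- v) = - (A *v v)"
  using matrix_vector_mult_diff_distrib[of A 0 v] by simp

lemma alg1: "(g::'a::ab_group_add) + a - p = 0 \<Longrightarrow> - g + (- a) = 0 \<Longrightarrow> p = 0"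
proof -
  assume h1: "g + a - p = 0" and h2: "- g + (- a) = 0"
  have "- (g + a) = 0" using h2 by (simp only: minus_add_distrib)
  hence "g + a = 0" by (simp only: neg_equal_0_iff_equal)
  with h1 show "p = 0" by simp
qed
lemma alg2: "(g::'a::ab_group_add) + a = 0 \<Longrightarrow> - g + (- a) - p = 0 \<Longrightarrow> p = 0"
proof -
  assume h1: "g + a = 0" and h2: "- g + (- a) - p = 0"
  have "- (g + a) - p = 0" using h2 by (simp only: minus_add_distrib)
  with h1 show "p = 0" by simp
qed
lemma alg3: "(g::'a::ab_group_add) - l1 + a + 0 = 0 \<Longrightarrow> - g - l2 + (- a) + 0 = 0 \<Longrightarrow> l2 = - l1"
proof -
  assume h1: "g - l1 + a + 0 = 0" and h2: "- g - l2 + (- a) + 0 = 0"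
  have "(g - l1 + a) + (- g - l2 + (- a)) = 0" using h1 h2 by simp
  hence "- l1 - l2 = 0" by (simp add: algebra_simps)
  thus "l2 = - l1" by (simp add: algebra_simps)
qed

theorem mainTheorem1:
  fixes K t :: nat
    and f :: "nat \<Rightarrow> real^'n \<Rightarrow> real^'m1 \<Rightarrow> real^'m2 \<Rightarrow> real^'n"
    and l :: "nat \<Rightarrow> real^'n \<Rightarrow> real^'m1 \<Rightarrow> real^'m2 \<Rightarrow> real"
    and lT :: "real^'n \<Rightarrow> real"
    and pi1 :: "nat \<Rightarrow> real^'n \<Rightarrow> real^'m1"
    and pi2 :: "nat \<Rightarrow> real^'n \<Rightarrow> real^'m2"
    and x :: "nat \<Rightarrow> real^'n"
    and u1 :: "nat \<Rightarrow> real^'m1"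
    and u2 :: "nat \<Rightarrow> real^'m2"
    and lam1 lam2 :: "nat \<Rightarrow> real^'n"
    and psi1 :: "nat \<Rightarrow> real^'m2"
    and psi2 :: "nat \<Rightarrow> real^'m1"
  assumes f_diff: "\<And>s z. s \<in> {1..K} \<Longrightarrow> (\<lambda>(y, a, b). f s y a b) differentiable (at z)"
    and l_diff: "\<And>s z. s \<in> {1..K} \<Longrightarrow> (\<lambda>(y, a, b). l s y a b) differentiable (at z)"
    and lT_diff: "\<And>z. lT differentiable (at z)"
    and pi1_diff: "\<And>s z. s \<in> {1..K} \<Longrightarrow> pi1 s differentiable (at z)"
    and pi2_diff: "\<And>s z. s \<in> {1..K} \<Longrightarrow> pi2 s differentiable (at z)"
    and t_range: "1 \<le> t" "t \<le> K - 1" "1 \<le> K"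
    and dyn: "\<And>s. s \<in> {1..K} \<Longrightarrow> x (s+1) = f s (x s) (u1 s) (u2 s)"
    and ctrl1: "\<And>s. s \<in> {1..K} \<Longrightarrow> u1 s = pi1 s (x s)"
    and ctrl2: "\<And>s. s \<in> {1..K} \<Longrightarrow> u2 s = pi2 s (x s)"
    and FB_agent1: "FB_conditions K t l lT f pi2 x u1 u2 lam1 psi1"
    and FB_agent2: "FB_conditions K t (\<lambda>s y a b. - l s y b a) (\<lambda>z. - lT z)
                      (\<lambda>s y a b. f s y b a) pi1 x u2 u1 lam2 psi2"
  shows "(\<forall>s\<in>{t..K}. lam2 s = - lam1 s \<and> lam1 s = - lam2 s) \<and>
         (\<forall>s\<in>{t+1..K}. psi1 s = 0 \<and> psi2 s = 0)"
proof -
  note A = FB_agent1[unfolded FB_conditions_def]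
  note B = FB_agent2[unfolded FB_conditions_def]
  note A1 = A[THEN conjunct1] and A2 = A[THEN conjunct2, THEN conjunct1]
    and A3 = A[THEN conjunct2, THEN conjunct2, THEN conjunct1]
    and A6 = A[THEN conjunct2, THEN conjunct2, THEN conjunct2, THEN conjunct2, THEN conjunct2]
  note B1 = B[THEN conjunct1] and B2 = B[THEN conjunct2, THEN conjunct1]
    and B3 = B[THEN conjunct2, THEN conjunct2, THEN conjunct1]
    and B6 = B[THEN conjunct2, THEN conjunct2, THEN conjunct2, THEN conjunct2, THEN conjunct2]
  have ld: "\<And>s y a b. s \<in> {t..K} \<Longrightarrow>
      (\<lambda>v. l s y a v) differentiable (at b) \<and> (\<lambda>v. l s y v b) differentiable (at a)
      \<and> (\<lambda>v. l s v a b) differentiable (at y)"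
  proof -
    fix s y a b assume "s \<in> {t..K}"
    hence "s \<in> {1..K}" using t_range by auto
    hence "\<And>w. (\<lambda>(y, a, b). l s y a b) differentiable (at w)" using l_diff by blast
    from part_diff[OF this] show "(\<lambda>v. l s y a v) differentiable (at b) \<and> (\<lambda>v. l s y v b) differentiable (at a)
      \<and> (\<lambda>v. l s v a b) differentiable (at y)" by blast
  qed
  have psi: "psi1 s = 0 \<and> psi2 s = 0 \<and> lam2 (s-1) = - lam1 (s-1)"
    if s: "s \<in> {t+1..K}" and P: "lam2 s = - lam1 s" for s
  proof -
    have st: "s \<in> {t..K}" using s by auto
    have a1: "gradient (\<lambda>v. l s (x s) (u1 s) v) (u2 s)
        + transpose (jacobian (\<lambda>v. f s (x s) (u1 s) v) (u2 s)) *v lam1 s - psi1 s = 0"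
      using bspec[OF A1 s] by blast
    have b2: "gradient (\<lambda>v. - l s (x s) (u1 s) v) (u2 s)
        + transpose (jacobian (\<lambda>v. f s (x s) (u1 s) v) (u2 s)) *v lam2 s = 0"
      using bspec[OF B2 st] by blast
    have "gradient (\<lambda>v. - l s (x s) (u1 s) v) (u2 s) = - gradient (\<lambda>v. l s (x s) (u1 s) v) (u2 s)"
      using grad_neg ld[OF st] by blast
    with b2 P have "- gradient (\<lambda>v. l s (x s) (u1 s) v) (u2 s)
        + (- (transpose (jacobian (\<lambda>v. f s (x s) (u1 s) v) (u2 s)) *v lam1 s)) = 0"
      by (simp only: mvneg)
    from alg1[OF a1 this] have p1: "psi1 s = 0" .
    have a2: "gradient (\<lambda>v. l s (x s) v (u2 s)) (u1 s)
        + transpose (jacobian (\<lambda>v. f s (x s) v (u2 s)) (u1 s)) *v lam1 s = 0"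
      using bspec[OF A2 st] by blast
    have b1: "gradient (\<lambda>v. - l s (x s) v (u2 s)) (u1 s)
        + transpose (jacobian (\<lambda>v. f s (x s) v (u2 s)) (u1 s)) *v lam2 s - psi2 s = 0"
      using bspec[OF B1 s] by blast
    have "gradient (\<lambda>v. - l s (x s) v (u2 s)) (u1 s) = - gradient (\<lambda>v. l s (x s) v (u2 s)) (u1 s)"
      using grad_neg ld[OF st] by blast
    with b1 P have "- gradient (\<lambda>v. l s (x s) v (u2 s)) (u1 s)
        + (- (transpose (jacobian (\<lambda>v. f s (x s) v (u2 s)) (u1 s)) *v lam1 s)) - psi2 s = 0"
      by (simp only: mvneg)
    from alg2[OF a2 this] have p2: "psi2 s = 0" .
    have a6: "gradient (\<lambda>y. l s y (u1 s) (u2 s)) (x s) - lam1 (s - 1)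
        + transpose (jacobian (\<lambda>y. f s y (u1 s) (u2 s)) (x s)) *v lam1 s
        + transpose (jacobian (pi2 s) (x s)) *v psi1 s = 0"
      using bspec[OF A6 s] by blast
    have b6: "gradient (\<lambda>y. - l s y (u1 s) (u2 s)) (x s) - lam2 (s - 1)
        + transpose (jacobian (\<lambda>y. f s y (u1 s) (u2 s)) (x s)) *v lam2 s
        + transpose (jacobian (pi1 s) (x s)) *v psi2 s = 0"
      using bspec[OF B6 s] by blast
    have "gradient (\<lambda>y. - l s y (u1 s) (u2 s)) (x s) = - gradient (\<lambda>y. l s y (u1 s) (u2 s)) (x s)"
      using grad_neg ld[OF st] by blast
    with b6 P p2 have b6': "- gradient (\<lambda>y. l s y (u1 s) (u2 s)) (x s) - lam2 (s - 1)
        + (- (transpose (jacobian (\<lambda>y. f s y (u1 s) (u2 s)) (x s)) *v lam1 s)) + 0 = 0"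
      by (simp only: mvneg matrix_vector_mult_0_right)
    from a6 p1 have a6': "gradient (\<lambda>y. l s y (u1 s) (u2 s)) (x s) - lam1 (s - 1)
        + transpose (jacobian (\<lambda>y. f s y (u1 s) (u2 s)) (x s)) *v lam1 s + 0 = 0"
      by (simp only: matrix_vector_mult_0_right)
    from alg3[OF a6' b6'] have "lam2 (s-1) = - lam1 (s-1)" .
    with p1 p2 show ?thesis by blast
  qed
  have lamK: "lam2 K = - lam1 K"
  proof -
    have "gradient (\<lambda>z. - lT z) (x (K+1)) = - gradient lT (x (K+1))"
      using grad_neg lT_diff by blast
    thus ?thesis using A3 B3 by (simp add: right_minus_eq)
  qed
  have ind: "n \<le> K - t \<Longrightarrow> lam2 (K - n) = - lam1 (K - n)" for n
  proof (induction n)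
    case 0 then show ?case using lamK by simp
  next
    case (Suc n)
    have "K - n \<in> {t+1..K}" using Suc.prems by auto
    from psi[OF this Suc.IH] Suc.prems have "lam2 (K - n - 1) = - lam1 (K - n - 1)" by simp
    moreover have "K - n - 1 = K - Suc n" by simp
    ultimately show ?case by simp
  qed
  have L: "\<forall>s\<in>{t..K}. lam2 s = - lam1 s"
  proof
    fix s assume "s \<in> {t..K}"
    hence "K - (K - s) = s" "K - s \<le> K - t" by auto
    thus "lam2 s = - lam1 s" using ind[of "K - s"] by simp
  qed
  show ?thesis
  proof
    show "\<forall>s\<in>{t..K}. lam2 s = - lam1 s \<and> lam1 s = - lam2 s" using L by simp
    show "\<forall>s\<in>{t+1..K}. psi1 s = 0 \<and> psi2 s = 0"
    proof
      fix s assume s: "s \<in> {t+1..K}"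
      hence "s \<in> {t..K}" by auto
      hence "lam2 s = - lam1 s" using L by (rule bspec[rotated])
      from psi[OF s this] show "psi1 s = 0 \<and> psi2 s = 0" by (simp only: conj_assoc)
    qed
  qed
qed

end
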